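(* Let $A$ and $B$ be complex Hilbert spaces and $n\geq 2$. Let $\vec{\alpha}=(\alpha_1,\ldots,\alpha_n)\in\mathcal{A}_n$. Then for all bounded operators $M_1,\ldots,M_n:A\rightarrow B$ and all positive semidefinite trace class operators $\rho$ on $A$, \[ \left(\sum_{i=1}^n M_i\right)\rho\left(\sum_{i=1}^n M_i\right)^\dagger \leq \sum_{i=1}^n \alpha_i M_i\rho M_i^\dagger . \] Conversely, let $\vec{\alpha}\in\mathbb{R}^n$ and let $(P_1,\ldots,P_n)$ be a projective measurement on $A$ (projections $P_i=P_i^\dagger=P_i^2$ with $\sum_{i=1}^n P_i=\mathbb{1}_A$) with $P_i\neq 0$ for all $i$. If $\left(\sum_i P_i\right)\rho\left(\sum_i P_i\right)^\dagger=\rho \leq \sum_{i=1}^n \alpha_i P_i\rho P_i$ holds for all positive semidefinite trace class operators $\rho$ on $A$, then $\vec{\alpha}\in\mathcal{A}_n$.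
   Context: $\mathcal{A}_n := \{\vec{\alpha}\in\mathbb{R}^n : \operatorname{diag}(\vec{\alpha}) \geq J\}$, where $\operatorname{diag}(\vec{\alpha})=\sum_{i=1}^n\alpha_i|i\rangle\langle i|$ is the $n\times n$ diagonal matrix with entries $\alpha_i$, $J=\sum_{i,j=1}^n|i\rangle\langle j|$ is the $n\times n$ all-ones matrix, and $\geq$ denotes the Löwner (positive semidefinite) order. All operator inequalities are in the Löwner order. *)

theory Defs
  imports "HOL-Analysis.Analysis"
begin

class scaleC = scaleR +
  fixes scaleC :: "complex \<Rightarrow> 'a \<Rightarrow> 'a"  (infixr \<open>*\<^sub>C\<close> 75)
  assumes scaleR_scaleC: "scaleR r = scaleC (complex_of_real r)"

class complex_vector = scaleC + ab_group_add +
  assumes scaleC_add_right: "a *\<^sub>C (x + y) = a *\<^sub>C x + a *\<^sub>C y"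
    and scaleC_add_left: "(a + b) *\<^sub>C x = a *\<^sub>C x + b *\<^sub>C x"
    and scaleC_scaleC: "a *\<^sub>C (b *\<^sub>C x) = (a * b) *\<^sub>C x"
    and scaleC_one: "1 *\<^sub>C x = x"

text \<open>Complex inner product space: inner product conjugate-linear in the first
  argument, linear in the second (physics convention); the norm is induced by it.\<close>
class complex_inner = complex_vector + real_normed_vector +
  fixes cinner :: "'a \<Rightarrow> 'a \<Rightarrow> complex"
  assumes cinner_commute: "cinner x y = cnj (cinner y x)"
    and cinner_add_left: "cinner (x + y) z = cinner x z + cinner y z"
    and cinner_scaleC_left: "cinner (r *\<^sub>C x) y = cnj r * cinner x y"
    and cinner_self_real_nonneg: "Im (cinner x x) = 0 \<and> Re (cinner x x) \<ge> 0"
    and cinner_eq_zero_iff: "cinner x x = 0 \<longleftrightarrow> x = 0"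
    and norm_eq_sqrt_cinner: "norm x = sqrt (Re (cinner x x))"

class chilbert_space = complex_inner + complete_space

definition clinear :: "('a::complex_vector \<Rightarrow> 'b::complex_vector) \<Rightarrow> bool" where
  "clinear f \<longleftrightarrow> (\<forall>x y. f (x + y) = f x + f y) \<and> (\<forall>c x. f (c *\<^sub>C x) = c *\<^sub>C f x)"

definition bounded_clinear :: "('a::complex_inner \<Rightarrow> 'b::complex_inner) \<Rightarrow> bool" where
  "bounded_clinear f \<longleftrightarrow> clinear f \<and> (\<exists>K. \<forall>x. norm (f x) \<le> norm x * K)"

text \<open>Adjoint: the (unique, for bounded operators on Hilbert spaces) operator with
  \<open>\<langle>M x, y\<rangle> = \<langle>x, M\<^sup>\<dagger> y\<rangle>\<close>.\<close>
definition adj :: "('a::complex_inner \<Rightarrow> 'b::complex_inner) \<Rightarrow> ('b \<Rightarrow> 'a)" where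
  "adj M = (SOME N. \<forall>x y. cinner (M x) y = cinner x (N y))"

definition pos_op :: "('a::complex_inner \<Rightarrow> 'a) \<Rightarrow> bool" where
  "pos_op T \<longleftrightarrow> (\<forall>x. Im (cinner x (T x)) = 0 \<and> Re (cinner x (T x)) \<ge> 0)"

definition loewner_le :: "('a::complex_inner \<Rightarrow> 'a) \<Rightarrow> ('a \<Rightarrow> 'a) \<Rightarrow> bool" where
  "loewner_le X Y \<longleftrightarrow> pos_op (\<lambda>x. Y x - X x)"

definition is_onb :: "'a::complex_inner set \<Rightarrow> bool" where
  "is_onb E \<longleftrightarrow> (\<forall>e\<in>E. cinner e e = 1) \<and> (\<forall>e\<in>E. \<forall>f\<in>E. e \<noteq> f \<longrightarrow> cinner e f = 0)
     \<and> (\<forall>x. (\<forall>e\<in>E. cinner e x = 0) \<longrightarrow> x = 0)"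

text \<open>Positive semidefinite trace-class operator: bounded, positive, and with finite
  trace \<open>\<Sum>\<^sub>e \<langle>e, \<rho> e\<rangle>\<close> over an orthonormal basis (for positive operators this is
  the standard trace-class condition, \<open>|\<rho>| = \<rho>\<close>).\<close>
definition pos_trace_class :: "('a::chilbert_space \<Rightarrow> 'a) \<Rightarrow> bool" where
  "pos_trace_class \<rho> \<longleftrightarrow> bounded_clinear \<rho> \<and> pos_op \<rho> \<and>
     (\<exists>E. is_onb E \<and> (\<lambda>e. Re (cinner e (\<rho> e))) summable_on E)"

definition sandwich :: "('a::complex_inner \<Rightarrow> 'b::complex_inner) \<Rightarrow> ('a \<Rightarrow> 'a) \<Rightarrow> 'b \<Rightarrow> 'b" where
  "sandwich M \<rho> = M \<circ> \<rho> \<circ> adj M"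

definition proj_measurement :: "nat \<Rightarrow> (nat \<Rightarrow> 'a::chilbert_space \<Rightarrow> 'a) \<Rightarrow> bool" where
  "proj_measurement n P \<longleftrightarrow>
     (\<forall>i\<in>{1..n}. bounded_clinear (P i) \<and> adj (P i) = P i \<and> P i \<circ> P i = P i)
     \<and> (\<lambda>x. \<Sum>i=1..n. P i x) = id"

definition psd_mat :: "nat \<Rightarrow> (nat \<Rightarrow> nat \<Rightarrow> complex) \<Rightarrow> bool" where
  "psd_mat n M \<longleftrightarrow> (\<forall>x :: nat \<Rightarrow> complex.
      Im (\<Sum>i=1..n. \<Sum>j=1..n. cnj (x i) * M i j * x j) = 0 \<and>
      Re (\<Sum>i=1..n. \<Sum>j=1..n. cnj (x i) * M i j * x j) \<ge> 0)"

definition diag_mat :: "(nat \<Rightarrow> real) \<Rightarrow> nat \<Rightarrow> nat \<Rightarrow> complex" where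
  "diag_mat \<alpha> i j = (if i = j then complex_of_real (\<alpha> i) else 0)"

definition ones_mat :: "nat \<Rightarrow> nat \<Rightarrow> complex" where
  "ones_mat i j = 1"

text \<open>\<open>\<alpha> \<in> \<A>\<^sub>n\<close> iff \<open>diag(\<alpha>) \<ge> J\<close>; only \<open>\<alpha> 1, \<dots>, \<alpha> n\<close> matter.\<close>
definition A_set :: "nat \<Rightarrow> (nat \<Rightarrow> real) set" where
  "A_set n = {\<alpha>. psd_mat n (\<lambda>i j. diag_mat \<alpha> i j - ones_mat i j)}"

end

theory Submission
  imports Defs
begin


lemma scaleC_zero_right[simp]: "a *\<^sub>C (0::'a::complex_vector) = 0"
proof -
  have "a *\<^sub>C (0::'a) + a *\<^sub>C 0 = a *\<^sub>C 0 + 0" by (simp add: scaleC_add_right[symmetric])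
  then show ?thesis by simp
qed

lemma scaleC_zero_left[simp]: "0 *\<^sub>C (x::'a::complex_vector) = 0"
proof -
  have "0 *\<^sub>C x + 0 *\<^sub>C x = 0 *\<^sub>C x + (0::'a)" by (simp add: scaleC_add_left[symmetric])
  then show ?thesis by simp
qed

lemma scaleC_minus_right: "a *\<^sub>C (- x::'a::complex_vector) = - (a *\<^sub>C x)"
proof -
  have "a *\<^sub>C (- x) + a *\<^sub>C x = 0" by (simp add: scaleC_add_right[symmetric])
  then show ?thesis by (simp add: eq_neg_iff_add_eq_0)
qed

lemma scaleC_diff_right: "a *\<^sub>C (x - y::'a::complex_vector) = a *\<^sub>C x - a *\<^sub>C y"
  by (simp only: diff_conv_add_uminus scaleC_add_right scaleC_minus_right)

lemma scaleC_sum_right: "a *\<^sub>C (\<Sum>i\<in>F. f i) = (\<Sum>i\<in>F. a *\<^sub>C (f i::'a::complex_vector))"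
  by (induction F rule: infinite_finite_induct) (auto simp: scaleC_add_right)

lemma cinner_zero_left[simp]: "cinner 0 (y::'a::complex_inner) = 0"
proof -
  have "cinner 0 y + cinner 0 y = cinner 0 y + 0" using cinner_add_left[of 0 0 y] by simp
  then show ?thesis by simp
qed

lemma cinner_zero_right[simp]: "cinner (y::'a::complex_inner) 0 = 0"
  by (subst cinner_commute) simp

lemma cinner_add_right: "cinner (x::'a::complex_inner) (y + z) = cinner x y + cinner x z"
proof -
  have "cinner x (y + z) = cnj (cinner (y + z) x)" by (rule cinner_commute)
  also have "\<dots> = cnj (cinner y x) + cnj (cinner z x)" by (simp add: cinner_add_left)
  also have "\<dots> = cinner x y + cinner x z" by (simp only: cinner_commute[of x y] cinner_commute[of x z])
  finally show ?thesis .
qed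

lemma cinner_scaleC_right: "cinner (x::'a::complex_inner) (r *\<^sub>C y) = r * cinner x y"
proof -
  have "cinner x (r *\<^sub>C y) = cnj (cinner (r *\<^sub>C y) x)" by (rule cinner_commute)
  also have "\<dots> = r * cnj (cinner y x)" by (simp add: cinner_scaleC_left)
  also have "\<dots> = r * cinner x y" by (simp only: cinner_commute[of x y])
  finally show ?thesis .
qed

lemma cinner_minus_left: "cinner (- x::'a::complex_inner) y = - cinner x y"
proof -
  have "cinner (- x) y + cinner x y = 0" by (simp add: cinner_add_left[symmetric])
  then show ?thesis by (simp add: eq_neg_iff_add_eq_0)
qed

lemma cinner_minus_right: "cinner (x::'a::complex_inner) (- y) = - cinner x y"
proof -
  have "cinner x (- y) + cinner x y = 0" by (simp add: cinner_add_right[symmetric])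
  then show ?thesis by (simp add: eq_neg_iff_add_eq_0)
qed

lemma cinner_diff_left: "cinner (x - y::'a::complex_inner) z = cinner x z - cinner y z"
  by (simp only: cinner_add_left cinner_minus_left diff_conv_add_uminus)

lemma cinner_diff_right: "cinner (x::'a::complex_inner) (y - z) = cinner x y - cinner x z"
  by (simp only: cinner_add_right cinner_minus_right diff_conv_add_uminus)

lemma cinner_sum_left: "cinner (\<Sum>i\<in>F. f i) (y::'a::complex_inner) = (\<Sum>i\<in>F. cinner (f i) y)"
  by (induction F rule: infinite_finite_induct) (auto simp: cinner_add_left)

lemma cinner_sum_right: "cinner (y::'a::complex_inner) (\<Sum>i\<in>F. f i) = (\<Sum>i\<in>F. cinner y (f i))"
  by (induction F rule: infinite_finite_induct) (auto simp: cinner_add_right)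

lemma cinner_scaleR_left: "cinner (r *\<^sub>R x::'a::complex_inner) y = complex_of_real r * cinner x y"
  by (simp add: scaleR_scaleC cinner_scaleC_left)

lemma cinner_scaleR_right: "cinner (x::'a::complex_inner) (r *\<^sub>R y) = complex_of_real r * cinner x y"
  by (simp add: scaleR_scaleC cinner_scaleC_right)

lemma norm_sq_cinner: "(norm (x::'a::complex_inner))^2 = Re (cinner x x)"
  using norm_eq_sqrt_cinner[of x] cinner_self_real_nonneg[of x] by simp

lemma cinner_self_eq: "cinner (x::'a::complex_inner) x = complex_of_real ((norm x)^2)"
  using norm_sq_cinner[of x] cinner_self_real_nonneg[of x] by (simp add: complex_eq_iff)



lemma quad_disc:
  fixes a b c :: real
  assumes h: "\<And>t. 0 \<le> a + b*t + c*t^2" and "0 \<le> a" "0 \<le> c"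
  shows "b^2 \<le> 4*a*c"
proof (cases "c = 0")
  case True
  have "b = 0"
  proof (rule ccontr)
    assume "b \<noteq> 0"
    have "0 \<le> a + b*(-(a+1)/b) + c*(-(a+1)/b)^2" by (rule h)
    with True \<open>b \<noteq> 0\<close> show False by (simp add: field_simps)
  qed
  then show ?thesis using True by simp
next
  case False
  then have cp: "c > 0" using assms by simp
  have "0 \<le> a + b*(-b/(2*c)) + c*(-b/(2*c))^2" by (rule h)
  also have "\<dots> = a - b^2/(4*c)" using cp by (simp add: field_simps power2_eq_square)
  finally have "b^2/(4*c) \<le> a" by simp
  then show ?thesis using cp by (simp add: field_simps)
qed

lemma semi_cs0:
  fixes \<rho> :: "'a::complex_inner \<Rightarrow> 'a"
  assumes add: "\<And>x y. \<rho> (x+y) = \<rho> x + \<rho> y"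
    and sc: "\<And>c x. \<rho> (c *\<^sub>C x) = c *\<^sub>C \<rho> x"
    and pos: "\<And>x. Re (cinner x (\<rho> x)) \<ge> 0"
  shows "(Re (cinner a (\<rho> b)) + Re (cinner b (\<rho> a)))^2
           \<le> 4 * Re (cinner a (\<rho> a)) * Re (cinner b (\<rho> b))"
proof -
  define Q where "Q x = Re (cinner x (\<rho> x))" for x
  define S where "S = Re (cinner a (\<rho> b)) + Re (cinner b (\<rho> a))"
  have scR: "\<rho> (t *\<^sub>R x) = t *\<^sub>R \<rho> x" for t x by (simp add: scaleR_scaleC sc)
  have "Q (a + t *\<^sub>R b) = Q a + S*t + Q b * t^2" for t
    by (simp add: Q_def S_def add scR cinner_add_left cinner_add_right cinner_scaleR_left
        cinner_scaleR_right power2_eq_square algebra_simps)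
  then have "\<And>t. 0 \<le> Q a + S*t + Q b * t^2" using pos unfolding Q_def by metis
  from quad_disc[OF this] pos show ?thesis unfolding Q_def S_def by simp
qed

lemma semi_triangle:
  fixes \<rho> :: "'a::complex_inner \<Rightarrow> 'a"
  assumes add: "\<And>x y. \<rho> (x+y) = \<rho> x + \<rho> y"
    and sc: "\<And>c x. \<rho> (c *\<^sub>C x) = c *\<^sub>C \<rho> x"
    and pos: "\<And>x. Re (cinner x (\<rho> x)) \<ge> 0"
  shows "sqrt (Re (cinner (a+b) (\<rho> (a+b)))) \<le> sqrt (Re (cinner a (\<rho> a))) + sqrt (Re (cinner b (\<rho> b)))"
proof -
  define Qa where "Qa = Re (cinner a (\<rho> a))"
  define Qb where "Qb = Re (cinner b (\<rho> b))"
  define S where "S = Re (cinner a (\<rho> b)) + Re (cinner b (\<rho> a))"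
  have d: "S^2 \<le> 4*Qa*Qb" using semi_cs0[OF add sc pos] unfolding S_def Qa_def Qb_def by blast
  have qa: "Qa \<ge> 0" "Qb \<ge> 0" using pos Qa_def Qb_def by auto
  have "S \<le> sqrt (S^2)" by simp
  also have "\<dots> \<le> sqrt (4*Qa*Qb)" using d by (rule real_sqrt_le_mono)
  also have "\<dots> = 2 * sqrt Qa * sqrt Qb" using qa by (simp add: real_sqrt_mult)
  finally have S2: "S \<le> 2 * sqrt Qa * sqrt Qb" .
  have e: "Re (cinner (a+b) (\<rho> (a+b))) = Qa + S + Qb"
    by (simp add: Qa_def Qb_def S_def add cinner_add_left cinner_add_right)
  have "Qa + S + Qb \<le> (sqrt Qa + sqrt Qb)^2" using S2 qa by (simp add: power2_eq_square algebra_simps)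
  then have "sqrt (Qa + S + Qb) \<le> sqrt ((sqrt Qa + sqrt Qb)^2)" by (rule real_sqrt_le_mono)
  also have "\<dots> = sqrt Qa + sqrt Qb" using qa by simp
  finally show ?thesis unfolding e Qa_def Qb_def .
qed

lemma norm_scaleC: "norm (c *\<^sub>C (x::'a::complex_inner)) = cmod c * norm x"
proof -
  have "cinner (c *\<^sub>C x) (c *\<^sub>C x) = cnj c * c * cinner x x"
    by (simp add: cinner_scaleC_left cinner_scaleC_right mult.assoc)
  then have "(norm (c *\<^sub>C x))^2 = Re (cnj c * c * cinner x x)"
    by (simp only: norm_sq_cinner)
  also have "\<dots> = (cmod c)^2 * (norm x)^2"
    by (simp add: cinner_self_eq cmod_power2[unfolded power2_eq_square] power2_eq_square del: of_real_power)
  finally have "(norm (c *\<^sub>C x))^2 = (cmod c * norm x)^2" by (simp add: power_mult_distrib)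
  then show ?thesis by (simp add: power2_eq_iff_nonneg)
qed

lemma Re_cinner_le: "\<bar>Re (cinner (x::'a::complex_inner) y)\<bar> \<le> norm x * norm y"
proof -
  have "(Re (cinner x (id y)) + Re (cinner y (id x)))^2 \<le> 4 * Re (cinner x (id x)) * Re (cinner y (id y))"
    by (rule semi_cs0) (auto simp: cinner_self_real_nonneg)
  moreover have "Re (cinner y x) = Re (cinner x y)" by (metis cinner_commute complex_cnj_cnj cnj.simps(1))
  ultimately have "(2 * Re (cinner x y))^2 \<le> 4 * (norm x)^2 * (norm y)^2" by (simp add: norm_sq_cinner)
  then have "(Re (cinner x y))^2 \<le> (norm x * norm y)^2" by (simp add: power_mult_distrib)
  then have "\<bar>Re (cinner x y)\<bar> \<le> \<bar>norm x * norm y\<bar>" by (simp only: abs_le_square_iff)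
  then show ?thesis by simp
qed

lemma cinner_cs: "cmod (cinner (x::'a::complex_inner) y) \<le> norm x * norm y"
proof (cases "cinner x y = 0")
  case True then show ?thesis by simp
next
  case False
  define z where "z = cinner x y"
  define c where "c = z / complex_of_real (cmod z)"
  have cm: "cmod c = 1" using False by (simp add: c_def z_def norm_divide)
  have "cinner (c *\<^sub>C x) y = cnj z * z / complex_of_real (cmod z)"
    by (simp add: c_def z_def cinner_scaleC_left)
  also have "\<dots> = complex_of_real (cmod z)" using False
    by (simp add: complex_norm_square[symmetric] mult.commute power2_eq_square z_def)
  finally have "cmod z = Re (cinner (c *\<^sub>C x) y)" by simp
  also have "\<dots> \<le> norm (c *\<^sub>C x) * norm y" using Re_cinner_le by (rule abs_le_D1)
  also have "\<dots> = norm x * norm y" by (simp add: norm_scaleC cm)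
  finally show ?thesis by (simp add: z_def)
qed



lemma parallelogram:
  "(norm (x - y::'a::complex_inner))^2 = 2*(norm x)^2 + 2*(norm y)^2 - (norm (x+y))^2"
  by (simp add: norm_sq_cinner cinner_add_left cinner_add_right cinner_diff_left cinner_diff_right)

lemma riesz:
  fixes g :: "'a::chilbert_space \<Rightarrow> complex"
  assumes add: "\<And>x y. g (x+y) = g x + g y"
    and sc: "\<And>c x. g (c *\<^sub>C x) = c * g x"
    and bnd: "\<And>x. cmod (g x) \<le> C * norm x"
  shows "\<exists>z. \<forall>x. g x = cinner z x"
proof (cases "\<forall>x. g x = 0")
  case True then show ?thesis by (intro exI[of _ 0]) simp
next
  case False
  then obtain x1 where x1: "g x1 \<noteq> 0" by auto
  have scR: "g (r *\<^sub>R x) = complex_of_real r * g x" for r x by (simp add: scaleR_scaleC sc)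
  have g0: "g 0 = 0" using sc[of 0 0] by simp
  have gdiff: "g (x - y) = g x - g y" for x y using add[of "x - y" y] by simp
  define H where "H = {x. g x = 1}"
  have h1: "(1 / g x1) *\<^sub>C x1 \<in> H" using x1 by (simp add: H_def sc)
  define d where "d = Inf (norm ` H)"
  have bdd: "bdd_below (norm ` H)" by (rule bdd_belowI[of _ 0]) auto
  have dle: "d \<le> norm h" if "h \<in> H" for h unfolding d_def by (rule cInf_lower) (auto simp: bdd that)
  have d0: "0 \<le> d" unfolding d_def using h1 by (intro cInf_greatest) auto
  have "\<exists>h\<in>H. norm h < d + inverse (real (Suc n))" for n
  proof -
    have "Inf (norm ` H) < d + inverse (real (Suc n))" unfolding d_def by simp
    then show ?thesis using h1 bdd by (subst (asm) cInf_less_iff) auto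
  qed
  then obtain hs where hsH: "\<And>n. hs n \<in> H" and hsn: "\<And>n. norm (hs n) < d + inverse (real (Suc n))"
    by metis
  have mid: "2*d \<le> norm (h + h')" if "h \<in> H" "h' \<in> H" for h h'
  proof -
    have "(1/2) *\<^sub>R (h + h') \<in> H" using that by (simp add: H_def scR add)
    then have "d \<le> norm ((1/2) *\<^sub>R (h + h'))" by (rule dle)
    then show ?thesis by simp
  qed
  define e where "e k = inverse (real (Suc k))" for k
  have e01: "0 < e k" "e k \<le> 1" for k by (auto simp: e_def field_simps)
  have pb: "(norm (hs m - hs n))^2 \<le> (4*d+2) * (e m + e n)" for m n
  proof -
    have a: "norm (hs m) \<le> d + e m" "norm (hs n) \<le> d + e n" using hsn less_imp_le e_def by auto
    have a2: "(norm (hs m))^2 \<le> (d + e m)^2" "(norm (hs n))^2 \<le> (d + e n)^2"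
      using a by (auto intro!: power_mono)
    have b: "(2*d)^2 \<le> (norm (hs m + hs n))^2" by (rule power_mono[OF mid[OF hsH hsH]]) (simp add: d0)
    have "(norm (hs m - hs n))^2 \<le> 2*(d + e m)^2 + 2*(d + e n)^2 - (2*d)^2"
      using parallelogram[of "hs m" "hs n"] a2 b by linarith
    also have "\<dots> = 4*d*e m + 2 * (e m * e m) + 4*d*e n + 2 * (e n * e n)"
      by (simp add: power2_eq_square algebra_simps)
    also have "\<dots> \<le> 4*d*e m + 2 * e m + 4*d*e n + 2 * e n"
      using e01[of m] e01[of n] by (intro add_mono mult_left_mono) (auto simp: mult_le_cancel_left1 d0)
    also have "\<dots> = (4*d+2) * (e m + e n)" by (simp add: algebra_simps)
    finally show ?thesis .
  qed
  have "Cauchy hs"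
  proof (rule CauchyI)
    fix r :: real assume r: "0 < r"
    have "0 < r^2 / (8*d+4)" using r d0 by simp
    then obtain N :: nat where N: "N > 0" "inverse (real N) < r^2 / (8*d+4)"
      using ex_inverse_of_nat_less by blast
    have "norm (hs m - hs n) < r" if "m \<ge> N" "n \<ge> N" for m n
    proof -
      have em: "e m \<le> inverse (real N)" "e n \<le> inverse (real N)" using that N
        by (auto simp: e_def intro!: le_imp_inverse_le)
      have "(norm (hs m - hs n))^2 \<le> (4*d+2) * (e m + e n)" by (rule pb)
      also have "\<dots> \<le> (4*d+2) * (2 * inverse (real N))" using em d0 by (intro mult_left_mono) auto
      also have "\<dots> < (4*d+2) * (2 * (r^2 / (8*d+4)))" using N d0 by (intro mult_strict_left_mono) auto
      also have "\<dots> = r^2" using d0 by (simp add: field_simps)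
      finally have "(norm (hs m - hs n))^2 < r^2" .
      then show ?thesis using r by (simp add: power_less_imp_less_base)
    qed
    then show "\<exists>M. \<forall>m\<ge>M. \<forall>n\<ge>M. norm (hs m - hs n) < r" by blast
  qed
  then obtain z0 where lim: "hs \<longlonglongrightarrow> z0" using Cauchy_convergent_iff convergent_def by blast
  have bl: "bounded_linear g"
  proof (rule bounded_linear_intro[where K = C])
    show "g (x + y) = g x + g y" for x y by (rule add)
    show "g (r *\<^sub>R x) = r *\<^sub>R g x" for r x by (simp add: scR scaleR_conv_of_real)
    show "norm (g x) \<le> norm x * C" for x using bnd[of x] by (simp add: mult.commute)
  qed
  have "(\<lambda>n. g (hs n)) \<longlonglongrightarrow> g z0" using bounded_linear.tendsto[OF bl lim] .
  moreover have "(\<lambda>n. g (hs n)) = (\<lambda>n. 1)" using hsH by (simp add: H_def)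
  ultimately have gz0: "g z0 = 1" using LIMSEQ_unique tendsto_const by metis
  have "norm z0 \<le> d"
  proof (rule LIMSEQ_le)
    show "(\<lambda>n. norm (hs n)) \<longlonglongrightarrow> norm z0" by (rule tendsto_norm[OF lim])
    show "(\<lambda>n. d + inverse (real (Suc n))) \<longlonglongrightarrow> d"
      using tendsto_add[OF tendsto_const LIMSEQ_inverse_real_of_nat, of d] by simp
    show "\<exists>N. \<forall>n\<ge>N. norm (hs n) \<le> d + inverse (real (Suc n))" using hsn less_imp_le by blast
  qed
  then have zmin: "norm z0 \<le> norm h" if "h \<in> H" for h using dle[OF that] by linarith
  have reo: "Re (cinner z0 k) = 0" if "g k = 0" for k
  proof -
    have "0 \<le> 0 + (2 * Re (cinner z0 k)) * t + (norm k)^2 * t^2" for t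
    proof -
      have "z0 + t *\<^sub>R k \<in> H" using gz0 that by (simp add: H_def add scR)
      then have "norm z0 \<le> norm (z0 + t *\<^sub>R k)" by (rule zmin)
      then have "(norm z0)^2 \<le> (norm (z0 + t *\<^sub>R k))^2" by (auto intro!: power_mono)
      moreover have "Re (cinner k z0) = Re (cinner z0 k)"
        by (metis cinner_commute cnj.simps(1))
      moreover have "Re (cinner (z0 + t *\<^sub>R k) (z0 + t *\<^sub>R k)) = Re (cinner z0 z0) + 2 * Re (cinner z0 k) * t + Re (cinner k k) * t^2"
        using calculation(2)
        by (simp add: cinner_add_left cinner_add_right cinner_scaleR_left
            cinner_scaleR_right power2_eq_square algebra_simps)
      ultimately show ?thesis by (simp add: norm_sq_cinner)
    qed
    from quad_disc[OF this] have "(2 * Re (cinner z0 k))^2 \<le> 0" by simp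
    then show ?thesis by simp
  qed
  have orth: "cinner z0 k = 0" if "g k = 0" for k
  proof -
    have "Re (cinner z0 k) = 0" using reo that .
    moreover have "Re (cinner z0 (\<i> *\<^sub>C k)) = 0" using reo that by (simp add: sc)
    then have "Im (cinner z0 k) = 0" by (simp add: cinner_scaleC_right)
    ultimately show ?thesis by (simp add: complex_eq_iff)
  qed
  have z0nz: "z0 \<noteq> 0" using gz0 g0 by auto
  have key: "cinner z0 x = g x * complex_of_real ((norm z0)^2)" for x
  proof -
    have "g (x - g x *\<^sub>C z0) = 0" by (simp add: gdiff sc gz0)
    then have "cinner z0 (x - g x *\<^sub>C z0) = 0" by (rule orth)
    then show ?thesis by (simp add: cinner_diff_right cinner_scaleC_right cinner_self_eq)
  qed
  show ?thesis
  proof (intro exI allI)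
    fix x
    show "g x = cinner ((1 / (norm z0)^2) *\<^sub>R z0) x"
      using z0nz by (simp add: cinner_scaleR_left key)
  qed
qed



lemma bounded_clinear_sum:
  fixes M :: "nat \<Rightarrow> 'a::complex_inner \<Rightarrow> 'b::complex_inner"
  assumes "finite F" "\<forall>i\<in>F. bounded_clinear (M i)"
  shows "bounded_clinear (\<lambda>x. \<Sum>i\<in>F. M i x)"
proof -
  have cl: "\<And>i. i \<in> F \<Longrightarrow> clinear (M i)" using assms(2) unfolding bounded_clinear_def by blast
  have madd: "M i (x + y) = M i x + M i y" if "i \<in> F" for i x y
    using cl[OF that] unfolding clinear_def by blast
  have msc: "M i (c *\<^sub>C x) = c *\<^sub>C M i x" if "i \<in> F" for i c x
    using cl[OF that] unfolding clinear_def by blast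
  have "\<forall>i\<in>F. \<exists>K. \<forall>x. norm (M i x) \<le> norm x * K"
    using assms(2) unfolding bounded_clinear_def by blast
  then have "\<exists>K. \<forall>i\<in>F. \<forall>x. norm (M i x) \<le> norm x * K i" by (rule bchoice)
  then obtain K where K0: "\<forall>i\<in>F. \<forall>x. norm (M i x) \<le> norm x * K i" by (elim exE)
  have K: "\<And>i x. i \<in> F \<Longrightarrow> norm (M i x) \<le> norm x * K i" using K0 by blast
  have c1: "clinear (\<lambda>x. \<Sum>i\<in>F. M i x)"
    unfolding clinear_def
  proof (intro conjI allI)
    fix x y
    have "(\<Sum>i\<in>F. M i (x + y)) = (\<Sum>i\<in>F. M i x + M i y)" by (rule sum.cong) (auto simp: madd)
    then show "(\<Sum>i\<in>F. M i (x + y)) = (\<Sum>i\<in>F. M i x) + (\<Sum>i\<in>F. M i y)"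
      by (simp only: sum.distrib)
  next
    fix c x
    have "(\<Sum>i\<in>F. M i (c *\<^sub>C x)) = (\<Sum>i\<in>F. c *\<^sub>C M i x)" by (rule sum.cong) (auto simp: msc)
    then show "(\<Sum>i\<in>F. M i (c *\<^sub>C x)) = c *\<^sub>C (\<Sum>i\<in>F. M i x)"
      by (simp only: scaleC_sum_right)
  qed
  have b1: "\<forall>x. norm (\<Sum>i\<in>F. M i x) \<le> norm x * (\<Sum>i\<in>F. K i)"
  proof
    fix x
    have "norm (\<Sum>i\<in>F. M i x) \<le> (\<Sum>i\<in>F. norm (M i x))" by (rule norm_sum)
    also have "\<dots> \<le> (\<Sum>i\<in>F. norm x * K i)" using K by (intro sum_mono) auto
    also have "\<dots> = norm x * (\<Sum>i\<in>F. K i)" by (simp only: sum_distrib_left)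
    finally show "norm (\<Sum>i\<in>F. M i x) \<le> norm x * (\<Sum>i\<in>F. K i)" .
  qed
  have "\<exists>K. \<forall>x. norm (\<Sum>i\<in>F. M i x) \<le> norm x * K" using b1 by (rule exI)
  with c1 show ?thesis unfolding bounded_clinear_def by (rule conjI)
qed


lemma psd_form:
  "(\<Sum>i=1..n. \<Sum>j=1..n. cnj (x i) * (diag_mat \<alpha> i j - ones_mat i j) * x j)
   = (\<Sum>i=1..n. complex_of_real (\<alpha> i) * (cnj (x i) * x i)) - (\<Sum>i=1..n. cnj (x i)) * (\<Sum>j=1..n. x j)"
proof -
  have e: "cnj (x i) * (diag_mat \<alpha> i j - ones_mat i j) * x j
      = (if i = j then complex_of_real (\<alpha> i) * (cnj (x i) * x i) else 0) - cnj (x i) * x j" for i j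
    by (cases "i = j") (simp_all add: diag_mat_def ones_mat_def right_diff_distrib left_diff_distrib mult.assoc mult.left_commute)
  have r: "(\<Sum>j=1..n. cnj (x i) * (diag_mat \<alpha> i j - ones_mat i j) * x j)
      = complex_of_real (\<alpha> i) * (cnj (x i) * x i) - cnj (x i) * (\<Sum>j=1..n. x j)" if "i \<in> {1..n}" for i
    using that by (simp add: e sum_subtractf sum_distrib_left sum.delta')
  have "(\<Sum>i=1..n. \<Sum>j=1..n. cnj (x i) * (diag_mat \<alpha> i j - ones_mat i j) * x j)
      = (\<Sum>i=1..n. complex_of_real (\<alpha> i) * (cnj (x i) * x i) - cnj (x i) * (\<Sum>j=1..n. x j))"
    using r by (intro sum.cong refl) blast
  also have "\<dots> = (\<Sum>i=1..n. complex_of_real (\<alpha> i) * (cnj (x i) * x i)) - (\<Sum>i=1..n. cnj (x i)) * (\<Sum>j=1..n. x j)"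
    by (simp only: sum_subtractf sum_distrib_right)
  finally show ?thesis .
qed


lemma cinner_swap:
  assumes "cinner (x::'a::complex_inner) y = cinner z w"
  shows "cinner y x = cinner w z"
proof -
  have "cinner y x = cnj (cinner x y)" by (rule cinner_commute)
  also have "\<dots> = cnj (cinner z w)" using assms by simp
  also have "\<dots> = cinner w z" by (rule cinner_commute[symmetric])
  finally show ?thesis .
qed

lemma adj_prop:
  fixes M :: "'a::chilbert_space \<Rightarrow> 'b::complex_inner"
  assumes "bounded_clinear M"
  shows "cinner (M x) y = cinner x (adj M y)"
proof -
  from assms obtain K where K: "\<And>x. norm (M x) \<le> norm x * K" and cl: "clinear M"
    unfolding bounded_clinear_def by blast
  have Madd: "M (x + x') = M x + M x'" and Msc: "M (c *\<^sub>C x) = c *\<^sub>C M x" for x x' c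
    using cl unfolding clinear_def by auto
  have "\<exists>z. \<forall>x. cinner y (M x) = cinner z x" for y
  proof (rule riesz)
    show "cinner y (M (x + x')) = cinner y (M x) + cinner y (M x')" for x x'
      by (simp add: Madd cinner_add_right)
    show "cinner y (M (c *\<^sub>C x)) = c * cinner y (M x)" for c x
      by (simp add: Msc cinner_scaleC_right)
    show "cmod (cinner y (M x)) \<le> (norm y * K) * norm x" for x
    proof -
      have "cmod (cinner y (M x)) \<le> norm y * norm (M x)" by (rule cinner_cs)
      also have "\<dots> \<le> norm y * (norm x * K)" using K by (simp add: mult_left_mono)
      finally show ?thesis by (simp add: ac_simps)
    qed
  qed
  then have "\<forall>y. \<exists>z. \<forall>x. cinner y (M x) = cinner z x" by blast
  then have "\<exists>N. \<forall>y. \<forall>x. cinner y (M x) = cinner (N y) x" by (rule choice)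
  then obtain N where N: "\<And>y x. cinner y (M x) = cinner (N y) x" by blast
  have "\<forall>x y. cinner (M x) y = cinner x (N y)"
    using N cinner_swap by blast
  then have "\<exists>N. \<forall>x y. cinner (M x) y = cinner x (N y)" by blast
  from someI_ex[OF this] show ?thesis unfolding adj_def by blast
qed


lemma semi_triangle_sum:
  fixes \<rho> :: "'a::complex_inner \<Rightarrow> 'a"
  assumes add: "\<And>x y. \<rho> (x+y) = \<rho> x + \<rho> y"
    and sc: "\<And>c x. \<rho> (c *\<^sub>C x) = c *\<^sub>C \<rho> x"
    and pos: "\<And>x. Re (cinner x (\<rho> x)) \<ge> 0"
  shows "sqrt (Re (cinner (\<Sum>i\<in>F. w i) (\<rho> (\<Sum>i\<in>F. w i)))) \<le> (\<Sum>i\<in>F. sqrt (Re (cinner (w i) (\<rho> (w i)))))"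
proof (induction F rule: infinite_finite_induct)
  case (infinite F) then show ?case by simp
next
  case empty then show ?case by simp
next
  case (insert x F)
  have "sqrt (Re (cinner (\<Sum>i\<in>insert x F. w i) (\<rho> (\<Sum>i\<in>insert x F. w i))))
      = sqrt (Re (cinner (w x + (\<Sum>i\<in>F. w i)) (\<rho> (w x + (\<Sum>i\<in>F. w i)))))"
    using insert by simp
  also have "\<dots> \<le> sqrt (Re (cinner (w x) (\<rho> (w x)))) + sqrt (Re (cinner (\<Sum>i\<in>F. w i) (\<rho> (\<Sum>i\<in>F. w i))))"
    by (rule semi_triangle[OF add sc pos])
  also have "\<dots> \<le> sqrt (Re (cinner (w x) (\<rho> (w x)))) + (\<Sum>i\<in>F. sqrt (Re (cinner (w i) (\<rho> (w i)))))"
    using insert.IH by simp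
  also have "\<dots> = (\<Sum>i\<in>insert x F. sqrt (Re (cinner (w i) (\<rho> (w i)))))" using insert by simp
  finally show ?case .
qed

lemma part1:
  fixes M :: "nat \<Rightarrow> 'a::chilbert_space \<Rightarrow> 'b::chilbert_space" and \<rho> :: "'a \<Rightarrow> 'a"
  assumes A: "\<alpha> \<in> A_set n" and bM: "\<forall>i\<in>{1..n}. bounded_clinear (M i)" and rho: "pos_trace_class \<rho>"
  shows "loewner_le (sandwich (\<lambda>x. \<Sum>i=1..n. M i x) \<rho>) (\<lambda>y. \<Sum>i=1..n. \<alpha> i *\<^sub>R sandwich (M i) \<rho> y)"
proof -
  define S where "S = (\<lambda>x. \<Sum>i=1..n. M i x)"
  have bS: "bounded_clinear S" unfolding S_def by (rule bounded_clinear_sum) (auto simp: bM)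
  from rho have brho: "bounded_clinear \<rho>" and prho: "pos_op \<rho>" unfolding pos_trace_class_def by auto
  have radd: "\<And>x y. \<rho> (x+y) = \<rho> x + \<rho> y" and rsc: "\<And>c x. \<rho> (c *\<^sub>C x) = c *\<^sub>C \<rho> x"
    using brho unfolding bounded_clinear_def clinear_def by auto
  have rim: "\<And>x. Im (cinner x (\<rho> x)) = 0" and rre: "\<And>x. Re (cinner x (\<rho> x)) \<ge> 0"
    using prho unfolding pos_op_def by auto
  have "Im (cinner y ((\<Sum>i=1..n. \<alpha> i *\<^sub>R sandwich (M i) \<rho> y) - sandwich S \<rho> y)) = 0 \<and>
        0 \<le> Re (cinner y ((\<Sum>i=1..n. \<alpha> i *\<^sub>R sandwich (M i) \<rho> y) - sandwich S \<rho> y))" for y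
  proof -
    define w where "w i = adj (M i) y" for i
    define W where "W = adj S y"
    have h1: "cinner y (M i z) = cinner (w i) z" if "i \<in> {1..n}" for i z
      using adj_prop[OF bM[rule_format, OF that], of z y] unfolding w_def by (rule cinner_swap)
    have h2: "cinner y (S z) = cinner W z" for z
      using adj_prop[OF bS, of z y] unfolding W_def by (rule cinner_swap)
    have Wsum: "W = (\<Sum>i=1..n. w i)"
    proof -
      have eq: "cinner x W = cinner x (\<Sum>i=1..n. w i)" for x
      proof -
        have "cinner x W = cinner (S x) y" using adj_prop[OF bS] W_def by simp
        also have "\<dots> = (\<Sum>i=1..n. cinner (M i x) y)" by (simp add: S_def cinner_sum_left)
        also have "\<dots> = (\<Sum>i=1..n. cinner x (w i))"
        proof (intro sum.cong refl)
          fix i assume "i \<in> {1..n}"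
          have "bounded_clinear (M i)" using bM \<open>i \<in> {1..n}\<close> by blast
          then show "cinner (M i x) y = cinner x (w i)" unfolding w_def by (rule adj_prop)
        qed
        also have "\<dots> = cinner x (\<Sum>i=1..n. w i)" by (simp add: cinner_sum_right)
        finally show ?thesis .
      qed
      have "cinner (W - (\<Sum>i=1..n. w i)) (W - (\<Sum>i=1..n. w i)) = 0"
        using eq by (simp add: cinner_diff_right)
      then have "W - (\<Sum>i=1..n. w i) = 0" using cinner_eq_zero_iff by blast
      then show ?thesis by simp
    qed
    define q where "q i = Re (cinner (w i) (\<rho> (w i)))" for i
    define Q where "Q = Re (cinner W (\<rho> W))"
    have cq: "cinner (w i) (\<rho> (w i)) = complex_of_real (q i)" for i
      using rim[of "w i"] by (simp add: q_def complex_eq_iff)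
    have cQ: "cinner W (\<rho> W) = complex_of_real Q"
      using rim[of W] by (simp add: Q_def complex_eq_iff)
    have "cinner y (\<Sum>i=1..n. \<alpha> i *\<^sub>R sandwich (M i) \<rho> y)
        = (\<Sum>i=1..n. complex_of_real (\<alpha> i) * cinner y (M i (\<rho> (w i))))"
      by (simp add: cinner_sum_right cinner_scaleR_right sandwich_def w_def)
    also have "\<dots> = (\<Sum>i=1..n. complex_of_real (\<alpha> i * q i))"
      using h1 cq by (intro sum.cong refl) auto
    also have "\<dots> = complex_of_real (\<Sum>i=1..n. \<alpha> i * q i)" by (simp only: of_real_sum)
    finally have e1: "cinner y (\<Sum>i=1..n. \<alpha> i *\<^sub>R sandwich (M i) \<rho> y) = complex_of_real (\<Sum>i=1..n. \<alpha> i * q i)" .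
    have e2: "cinner y (sandwich S \<rho> y) = complex_of_real Q"
      by (simp add: sandwich_def h2 cQ flip: W_def)
    have ex: "cinner y ((\<Sum>i=1..n. \<alpha> i *\<^sub>R sandwich (M i) \<rho> y) - sandwich S \<rho> y)
        = complex_of_real ((\<Sum>i=1..n. \<alpha> i * q i) - Q)"
      by (simp only: cinner_diff_right e1 e2 of_real_diff)
    define s where "s i = sqrt (q i)" for i
    have q0: "q i \<ge> 0" for i using rre q_def by simp
    have Q0: "Q \<ge> 0" using rre Q_def by simp
    have ss: "s i * s i = q i" for i using q0 s_def by simp
    have tri: "sqrt Q \<le> (\<Sum>i=1..n. s i)"
      unfolding Q_def Wsum s_def q_def by (rule semi_triangle_sum[OF radd rsc rre])
    have "0 \<le> Re (\<Sum>i=1..n. \<Sum>j=1..n. cnj (complex_of_real (s i)) * (diag_mat \<alpha> i j - ones_mat i j) * complex_of_real (s j))"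
    proof -
      have "\<forall>x. 0 \<le> Re (\<Sum>i=1..n. \<Sum>j=1..n. cnj (x i) * (diag_mat \<alpha> i j - ones_mat i j) * x j)"
        using A unfolding A_set_def psd_mat_def by blast
      then show ?thesis by (rule allE[where x="\<lambda>i. complex_of_real (s i)"]) simp
    qed
    then have "0 \<le> (\<Sum>i=1..n. \<alpha> i * (s i * s i)) - (\<Sum>i=1..n. s i) * (\<Sum>i=1..n. s i)"
      unfolding psd_form by (simp add: Re_sum)
    then have ps: "(\<Sum>i=1..n. s i)^2 \<le> (\<Sum>i=1..n. \<alpha> i * q i)" by (simp add: ss power2_eq_square)
    have "Q = (sqrt Q)^2" using Q0 by simp
    also have "\<dots> \<le> (\<Sum>i=1..n. s i)^2" using tri Q0 by (intro power_mono) auto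
    finally have "Q \<le> (\<Sum>i=1..n. \<alpha> i * q i)" using ps by linarith
    then show ?thesis unfolding ex by simp
  qed
  then show ?thesis unfolding loewner_le_def pos_op_def S_def by blast
qed



lemma onb_ext:
  fixes u :: "'a::complex_inner" assumes u: "norm u = 1" shows "\<exists>E. is_onb E \<and> u \<in> E"
proof -
  define ON where "ON = {S. u \<in> S \<and> (\<forall>e\<in>S. cinner e e = 1) \<and> (\<forall>e\<in>S. \<forall>f\<in>S. e \<noteq> f \<longrightarrow> cinner e f = 0)}"
  have uu: "cinner u u = 1" using u by (simp add: cinner_self_eq)
  have "\<forall>C\<in>chains ON. \<exists>U\<in>ON. \<forall>X\<in>C. X \<subseteq> U"
  proof
    fix C assume C: "C \<in> chains ON"
    show "\<exists>U\<in>ON. \<forall>X\<in>C. X \<subseteq> U"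
    proof (cases "C = {}")
      case True
      have "{u} \<in> ON" unfolding ON_def using uu by simp
      then show ?thesis using True by blast
    next
      case False
      have sub: "C \<subseteq> ON" and ch: "\<forall>X\<in>C. \<forall>Y\<in>C. X \<subseteq> Y \<or> Y \<subseteq> X"
        using C unfolding chains_def chain_subset_def by blast+
      have "\<Union>C \<in> ON"
      proof -
        from False obtain X0 where "X0 \<in> C" by auto
        then have "u \<in> \<Union>C" using sub unfolding ON_def by blast
        moreover have "\<forall>e\<in>\<Union>C. cinner e e = 1" using sub unfolding ON_def by blast
        moreover have "\<forall>e\<in>\<Union>C. \<forall>f\<in>\<Union>C. e \<noteq> f \<longrightarrow> cinner e f = 0"
        proof (intro ballI impI)
          fix e f assume "e \<in> \<Union>C" "f \<in> \<Union>C" "e \<noteq> f"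
          then obtain X Y where XY: "X \<in> C" "Y \<in> C" "e \<in> X" "f \<in> Y" by auto
          show "cinner e f = 0"
          proof (cases "X \<subseteq> Y")
            case True
            then have "e \<in> Y" using XY by auto
            then show ?thesis using sub XY \<open>e \<noteq> f\<close> unfolding ON_def by blast
          next
            case False
            then have "Y \<subseteq> X" using ch XY by blast
            then have "f \<in> X" using XY by auto
            then show ?thesis using sub XY \<open>e \<noteq> f\<close> unfolding ON_def by blast
          qed
        qed
        ultimately show ?thesis unfolding ON_def by blast
      qed
      then show ?thesis by blast
    qed
  qed
  from Zorn_Lemma2[OF this] obtain M where MON: "M \<in> ON" and max: "\<forall>X\<in>ON. M \<subseteq> X \<longrightarrow> X = M"
    by blast
  have M1: "\<forall>e\<in>M. cinner e e = 1" and M2: "\<forall>e\<in>M. \<forall>f\<in>M. e \<noteq> f \<longrightarrow> cinner e f = 0"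
    using MON unfolding ON_def by blast+
  have M3: "x = 0" if orth: "\<forall>e\<in>M. cinner e x = 0" for x
  proof (rule ccontr)
    assume "x \<noteq> 0"
    define x' where "x' = (1 / norm x) *\<^sub>R x"
    have "norm x' = 1" using \<open>x \<noteq> 0\<close> by (simp add: x'_def)
    then have nx': "cinner x' x' = 1" by (simp add: cinner_self_eq)
    have o1: "\<forall>e\<in>M. cinner e x' = 0" using orth by (simp add: x'_def cinner_scaleR_right)
    have o2: "\<forall>e\<in>M. cinner x' e = 0"
    proof
      fix e assume "e \<in> M"
      have "cinner x' e = cnj (cinner e x')" by (rule cinner_commute)
      then show "cinner x' e = 0" using o1 \<open>e \<in> M\<close> by simp
    qed
    have uM: "u \<in> M" using MON unfolding ON_def by blast
    have i1: "\<forall>e\<in>insert x' M. cinner e e = 1" using nx' M1 by simp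
    have i2: "\<forall>e\<in>insert x' M. \<forall>f\<in>insert x' M. e \<noteq> f \<longrightarrow> cinner e f = 0"
    proof (intro ballI impI)
      fix e f assume e: "e \<in> insert x' M" and f: "f \<in> insert x' M" and ef: "e \<noteq> f"
      show "cinner e f = 0"
      proof (cases "e = x'")
        case True
        then have "f \<in> M" using f ef by blast
        then show ?thesis using o2 True by blast
      next
        case False
        then have eM: "e \<in> M" using e by blast
        show ?thesis
        proof (cases "f = x'")
          case True then show ?thesis using o1 eM by blast
        next
          case False then have "f \<in> M" using f by blast
          then show ?thesis using M2 eM ef by blast
        qed
      qed
    qed
    have "insert x' M \<in> ON" unfolding ON_def using uM i1 i2 by blast
    then have "insert x' M = M" using max by blast
    then have "x' \<in> M" by blast
    then have "cinner x' x' = 0" using o1 by blast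
    with nx' show False by simp
  qed
  have "is_onb M" unfolding is_onb_def using M1 M2 M3 by blast
  moreover have "u \<in> M" using MON unfolding ON_def by blast
  ultimately show ?thesis by blast
qed

lemma part2:
  fixes P :: "nat \<Rightarrow> 'a::chilbert_space \<Rightarrow> 'a"
  assumes n2: "2 \<le> n" and pm: "proj_measurement n P" and nz: "\<forall>i\<in>{1..n}. P i \<noteq> (\<lambda>_. 0)"
    and H: "\<forall>\<rho>. pos_trace_class \<rho> \<longrightarrow> sandwich (\<lambda>x. \<Sum>i=1..n. P i x) \<rho> = \<rho> \<and>
                 loewner_le \<rho> (\<lambda>y. \<Sum>i=1..n. \<alpha> i *\<^sub>R sandwich (P i) \<rho> y)"
  shows "\<alpha> \<in> A_set n"
proof -
  have bP: "\<And>i. i \<in> {1..n} \<Longrightarrow> bounded_clinear (P i)"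
    and adjP: "\<And>i. i \<in> {1..n} \<Longrightarrow> adj (P i) = P i"
    and idem0: "\<And>i. i \<in> {1..n} \<Longrightarrow> P i \<circ> P i = P i"
    and sumid: "(\<lambda>x. \<Sum>i=1..n. P i x) = id"
    using pm unfolding proj_measurement_def by auto
  have sa: "cinner (P i x) y = cinner x (P i y)" if "i \<in> {1..n}" for i x y
    using adj_prop[OF bP[OF that], of x y] adjP[OF that] by simp
  have idem: "P i (P i x) = P i x" if "i \<in> {1..n}" for i x
    using fun_cong[OF idem0[OF that], of x] by simp
  have sumx: "(\<Sum>i=1..n. P i x) = x" for x using fun_cong[OF sumid, of x] by simp
  have Padd: "P i (x + y) = P i x + P i y" and Psc: "P i (c *\<^sub>C x) = c *\<^sub>C P i x"
    if "i \<in> {1..n}" for i x y c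
    using bP[OF that] unfolding bounded_clinear_def clinear_def by auto
  have P0: "P i 0 = 0" if "i \<in> {1..n}" for i using Psc[OF that, of 0 0] by simp
  have Psum: "P i (\<Sum>j\<in>F. f j) = (\<Sum>j\<in>F. P i (f j))" if "i \<in> {1..n}" for i F f
    by (induction F rule: infinite_finite_induct) (auto simp: P0[OF that] Padd[OF that])
  have normsq: "(norm x)^2 = (\<Sum>k=1..n. (norm (P k x))^2)" for x
  proof -
    have "cinner x x = cinner x (\<Sum>k=1..n. P k x)" by (simp only: sumx)
    also have "\<dots> = (\<Sum>k=1..n. cinner x (P k x))" by (simp add: cinner_sum_right)
    also have "\<dots> = (\<Sum>k=1..n. complex_of_real ((norm (P k x))^2))"
    proof (intro sum.cong refl)
      fix k assume k: "k \<in> {1..n}"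
      have "cinner x (P k x) = cinner x (P k (P k x))" by (simp add: idem[OF k])
      also have "\<dots> = cinner (P k x) (P k x)" by (simp add: sa[OF k])
      finally show "cinner x (P k x) = complex_of_real ((norm (P k x))^2)" by (simp add: cinner_self_eq)
    qed
    finally have "complex_of_real ((norm x)^2) = complex_of_real (\<Sum>k=1..n. (norm (P k x))^2)"
      by (simp add: cinner_self_eq)
    then show ?thesis using of_real_eq_iff by blast
  qed
  have "\<forall>i\<in>{1..n}. \<exists>e. P i e = e \<and> norm e = 1"
  proof
    fix i assume i: "i \<in> {1..n}"
    have "P i \<noteq> (\<lambda>_. 0)" using nz i by blast
    then obtain u where "P i u \<noteq> 0" by (auto simp: fun_eq_iff)
    define f where "f = P i u"
    have f0: "f \<noteq> 0" and Pf: "P i f = f" using \<open>P i u \<noteq> 0\<close> idem[OF i] by (auto simp: f_def)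
    define e where "e = (1 / norm f) *\<^sub>R f"
    have "P i e = e" unfolding e_def by (simp add: scaleR_scaleC Psc[OF i] Pf)
    moreover have "norm e = 1" using f0 by (simp add: e_def)
    ultimately show "\<exists>e. P i e = e \<and> norm e = 1" by blast
  qed
  then have "\<exists>e. \<forall>i\<in>{1..n}. P i (e i) = e i \<and> norm (e i) = 1" by (rule bchoice)
  then obtain e where Pe: "\<And>i. i \<in> {1..n} \<Longrightarrow> P i (e i) = e i" and ne: "\<And>i. i \<in> {1..n} \<Longrightarrow> norm (e i) = 1"
    by blast
  have Poff: "P j (e i) = 0" if ij: "i \<in> {1..n}" "j \<in> {1..n}" "i \<noteq> j" for i j
  proof -
    have "1 = (\<Sum>k=1..n. (norm (P k (e i)))^2)" using normsq[of "e i"] ne[OF ij(1)] by simp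
    also have "\<dots> = (norm (P i (e i)))^2 + (\<Sum>k\<in>{1..n}-{i}. (norm (P k (e i)))^2)"
      using ij(1) by (simp add: sum.remove)
    also have "\<dots> = 1 + (\<Sum>k\<in>{1..n}-{i}. (norm (P k (e i)))^2)" using Pe[OF ij(1)] ne[OF ij(1)] by simp
    finally have "(\<Sum>k\<in>{1..n}-{i}. (norm (P k (e i)))^2) = 0" by simp
    then have "\<forall>k\<in>{1..n}-{i}. (norm (P k (e i)))^2 = 0" by (subst (asm) sum_nonneg_eq_0_iff) auto
    then show ?thesis using ij by auto
  qed
  have orthn: "cinner (e i) (e j) = (if i = j then 1 else 0)" if ij: "i \<in> {1..n}" "j \<in> {1..n}" for i j
  proof (cases "i = j")
    case True then show ?thesis using ne[OF ij(1)] by (simp add: cinner_self_eq)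
  next
    case False
    have "cinner (e i) (e j) = cinner (e i) (P j (e j))" using Pe[OF ij(2)] by simp
    also have "\<dots> = cinner (P j (e i)) (e j)" using sa[OF ij(2)] by simp
    also have "\<dots> = 0" using Poff[OF ij False] by simp
    finally show ?thesis using False by simp
  qed
  define v where "v = (\<Sum>k=1..n. e k)"
  have ve1: "cinner v (e i) = 1" if i: "i \<in> {1..n}" for i
  proof -
    have "cinner v (e i) = (\<Sum>k=1..n. cinner (e k) (e i))" by (simp add: v_def cinner_sum_left)
    also have "\<dots> = (\<Sum>k=1..n. if k = i then 1 else 0)"
    proof (intro sum.cong refl)
      fix k assume "k \<in> {1..n}"
      then show "cinner (e k) (e i) = (if k = i then 1 else 0)" using orthn[OF _ i] by blast
    qed
    also have "\<dots> = 1" using i by simp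
    finally show ?thesis .
  qed
  have ve2: "cinner (e i) v = 1" if i: "i \<in> {1..n}" for i
  proof -
    have "cinner (e i) v = cnj (cinner v (e i))" by (rule cinner_commute)
    then show ?thesis using ve1[OF i] by simp
  qed
  have vnz: "v \<noteq> 0" using ve1[of 1] n2 by auto
  define \<rho> where "\<rho> x = cinner v x *\<^sub>C v" for x
  have rho: "pos_trace_class \<rho>"
  proof -
    have "clinear \<rho>" unfolding clinear_def \<rho>_def
      by (simp add: cinner_add_right cinner_scaleC_right scaleC_add_left scaleC_scaleC)
    moreover have "norm (\<rho> x) \<le> norm x * (norm v * norm v)" for x
    proof -
      have "norm (\<rho> x) = cmod (cinner v x) * norm v" by (simp add: \<rho>_def norm_scaleC)
      also have "\<dots> \<le> (norm v * norm x) * norm v" by (intro mult_right_mono cinner_cs) auto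
      finally show ?thesis by (simp add: ac_simps)
    qed
    ultimately have bc: "bounded_clinear \<rho>" unfolding bounded_clinear_def by blast
    have crho: "cinner x (\<rho> x) = complex_of_real ((Re (cinner v x))^2 + (Im (cinner v x))^2)" for x
    proof -
      have "cinner x (\<rho> x) = cinner v x * cnj (cinner v x)"
        using cinner_commute[of x v] by (simp add: \<rho>_def cinner_scaleC_right)
      then show ?thesis by (simp add: complex_mult_cnj)
    qed
    have po: "pos_op \<rho>" unfolding pos_op_def crho by simp
    define u where "u = (1 / norm v) *\<^sub>R v"
    have "norm u = 1" using vnz by (simp add: u_def)
    then obtain E where E: "is_onb E" "u \<in> E" using onb_ext by blast
    have vu: "v = norm v *\<^sub>R u" using vnz by (simp add: u_def)
    have z: "Re (cinner f (\<rho> f)) = 0" if "f \<in> E - {u}" for f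
    proof -
      have fE: "f \<in> E" "u \<noteq> f" using that by auto
      have "\<forall>e\<in>E. \<forall>f\<in>E. e \<noteq> f \<longrightarrow> cinner e f = 0" using E(1) unfolding is_onb_def by blast
      then have "cinner u f = 0" using fE E(2) by blast
      then have "cinner v f = 0" by (subst vu) (simp add: cinner_scaleR_left)
      then show ?thesis by (simp add: crho)
    qed
    have "(\<lambda>f. Re (cinner f (\<rho> f))) summable_on E \<longleftrightarrow> (\<lambda>f. Re (cinner f (\<rho> f))) summable_on {u}"
      by (rule summable_on_cong_neutral) (use E z in auto)
    then have "(\<lambda>f. Re (cinner f (\<rho> f))) summable_on E" by simp
    then show ?thesis unfolding pos_trace_class_def using bc po E by blast
  qed
  have L: "loewner_le \<rho> (\<lambda>y. \<Sum>i=1..n. \<alpha> i *\<^sub>R sandwich (P i) \<rho> y)" using H rho by blast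
  show ?thesis unfolding A_set_def psd_mat_def
  proof (intro CollectI allI)
    fix x :: "nat \<Rightarrow> complex"
    define y where "y = (\<Sum>j=1..n. x j *\<^sub>C e j)"
    have Py: "P i y = x i *\<^sub>C e i" if i: "i \<in> {1..n}" for i
    proof -
      have "P i y = (\<Sum>j=1..n. x j *\<^sub>C P i (e j))" by (simp add: y_def Psum[OF i] Psc[OF i])
      also have "\<dots> = (\<Sum>j=1..n. if j = i then x i *\<^sub>C e i else 0)"
      proof (intro sum.cong refl)
        fix j assume j: "j \<in> {1..n}"
        show "x j *\<^sub>C P i (e j) = (if j = i then x i *\<^sub>C e i else 0)"
          using Poff[OF j i] Pe[OF i] by auto
      qed
      also have "\<dots> = x i *\<^sub>C e i" using i by simp
      finally show ?thesis .
    qed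
    have k1: "cinner y (sandwich (P i) \<rho> y) = complex_of_real (\<alpha> 0) * 0 + cnj (x i) * x i" if i: "i \<in> {1..n}" for i
    proof -
      have "cinner y (sandwich (P i) \<rho> y) = cinner y (P i (\<rho> (P i y)))" by (simp add: sandwich_def adjP[OF i])
      also have "\<dots> = cinner (P i y) (\<rho> (P i y))" by (simp add: sa[OF i])
      also have "\<dots> = cnj (x i) * x i" by (simp add: Py[OF i] \<rho>_def cinner_scaleC_left cinner_scaleC_right ve1[OF i] ve2[OF i])
      finally show ?thesis by simp
    qed
    have vy: "cinner v y = (\<Sum>j=1..n. x j)"
      by (simp add: y_def cinner_sum_right cinner_scaleC_right ve1)
    have yv: "cinner y v = (\<Sum>j=1..n. cnj (x j))"
      by (simp add: y_def cinner_sum_left cinner_scaleC_left ve2)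
    have k2: "cinner y (\<rho> y) = (\<Sum>j=1..n. cnj (x j)) * (\<Sum>j=1..n. x j)"
      by (simp add: \<rho>_def cinner_scaleC_right vy yv)
    have "cinner y ((\<Sum>i=1..n. \<alpha> i *\<^sub>R sandwich (P i) \<rho> y) - \<rho> y)
        = (\<Sum>i=1..n. complex_of_real (\<alpha> i) * cinner y (sandwich (P i) \<rho> y)) - cinner y (\<rho> y)"
      by (simp add: cinner_diff_right cinner_sum_right cinner_scaleR_right)
    also have "\<dots> = (\<Sum>i=1..n. complex_of_real (\<alpha> i) * (cnj (x i) * x i)) - (\<Sum>i=1..n. cnj (x i)) * (\<Sum>j=1..n. x j)"
      using k1 k2 by simp
    also have "\<dots> = (\<Sum>i=1..n. \<Sum>j=1..n. cnj (x i) * (diag_mat \<alpha> i j - ones_mat i j) * x j)"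
      by (rule psd_form[symmetric])
    finally have eq: "cinner y ((\<Sum>i=1..n. \<alpha> i *\<^sub>R sandwich (P i) \<rho> y) - \<rho> y)
        = (\<Sum>i=1..n. \<Sum>j=1..n. cnj (x i) * (diag_mat \<alpha> i j - ones_mat i j) * x j)" .
    from L have "Im (cinner y ((\<Sum>i=1..n. \<alpha> i *\<^sub>R sandwich (P i) \<rho> y) - \<rho> y)) = 0 \<and>
        0 \<le> Re (cinner y ((\<Sum>i=1..n. \<alpha> i *\<^sub>R sandwich (P i) \<rho> y) - \<rho> y))"
      unfolding loewner_le_def pos_op_def by blast
    then show "Im (\<Sum>i=1..n. \<Sum>j=1..n. cnj (x i) * (diag_mat \<alpha> i j - ones_mat i j) * x j) = 0 \<and>
        0 \<le> Re (\<Sum>i=1..n. \<Sum>j=1..n. cnj (x i) * (diag_mat \<alpha> i j - ones_mat i j) * x j)"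
      unfolding eq .
  qed
qed


theorem lemma1:
  shows "(\<forall>(n::nat) (\<alpha>::nat \<Rightarrow> real) (M::nat \<Rightarrow> 'a::chilbert_space \<Rightarrow> 'b::chilbert_space)
            (\<rho>::'a \<Rightarrow> 'a).
            2 \<le> n \<and> \<alpha> \<in> A_set n \<and> (\<forall>i\<in>{1..n}. bounded_clinear (M i)) \<and> pos_trace_class \<rho>
            \<longrightarrow> loewner_le (sandwich (\<lambda>x. \<Sum>i=1..n. M i x) \<rho>)
                            (\<lambda>y. \<Sum>i=1..n. \<alpha> i *\<^sub>R sandwich (M i) \<rho> y))
       \<and> (\<forall>(n::nat) (\<alpha>::nat \<Rightarrow> real) (P::nat \<Rightarrow> 'a \<Rightarrow> 'a).
            2 \<le> n \<and> proj_measurement n P \<and> (\<forall>i\<in>{1..n}. P i \<noteq> (\<lambda>_. 0)) \<and>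
            (\<forall>\<rho>. pos_trace_class \<rho> \<longrightarrow>
                 sandwich (\<lambda>x. \<Sum>i=1..n. P i x) \<rho> = \<rho> \<and>
                 loewner_le \<rho> (\<lambda>y. \<Sum>i=1..n. \<alpha> i *\<^sub>R sandwich (P i) \<rho> y))
            \<longrightarrow> \<alpha> \<in> A_set n)"
  proof (intro conjI allI impI)
  fix n :: nat and \<alpha> :: "nat \<Rightarrow> real" and M :: "nat \<Rightarrow> 'a \<Rightarrow> 'b" and \<rho> :: "'a \<Rightarrow> 'a"
  assume h: "2 \<le> n \<and> \<alpha> \<in> A_set n \<and> (\<forall>i\<in>{1..n}. bounded_clinear (M i)) \<and> pos_trace_class \<rho>"
  then have h2: "\<alpha> \<in> A_set n" "\<forall>i\<in>{1..n}. bounded_clinear (M i)" "pos_trace_class \<rho>" by simp_all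
  show "loewner_le (sandwich (\<lambda>x. \<Sum>i=1..n. M i x) \<rho>) (\<lambda>y. \<Sum>i=1..n. \<alpha> i *\<^sub>R sandwich (M i) \<rho> y)"
    by (rule part1[OF h2])
next
  fix n :: nat and \<alpha> :: "nat \<Rightarrow> real" and P :: "nat \<Rightarrow> 'a \<Rightarrow> 'a"
  assume h: "2 \<le> n \<and> proj_measurement n P \<and> (\<forall>i\<in>{1..n}. P i \<noteq> (\<lambda>_. 0)) \<and>
            (\<forall>\<rho>. pos_trace_class \<rho> \<longrightarrow>
                 sandwich (\<lambda>x. \<Sum>i=1..n. P i x) \<rho> = \<rho> \<and>
                 loewner_le \<rho> (\<lambda>y. \<Sum>i=1..n. \<alpha> i *\<^sub>R sandwich (P i) \<rho> y))"
  then have h2: "2 \<le> n" "proj_measurement n P" "\<forall>i\<in>{1..n}. P i \<noteq> (\<lambda>_. 0)"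
     "\<forall>\<rho>. pos_trace_class \<rho> \<longrightarrow>
                 sandwich (\<lambda>x. \<Sum>i=1..n. P i x) \<rho> = \<rho> \<and>
                 loewner_le \<rho> (\<lambda>y. \<Sum>i=1..n. \<alpha> i *\<^sub>R sandwich (P i) \<rho> y)"
    by simp_all
  show "\<alpha> \<in> A_set n" by (rule part2[OF h2])
qed

end
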